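(* In the pool-based active learning setting, the utility function $f(S,\phi)=1-p_H(\mathcal{H}(\phi|_S))$ is worst-case submodular with respect to the induced prior $p(\phi)$; that is, for all partial realizations $\psi\subseteq\psi'$ (with positive probability) and every $e\in E\setminus\mathrm{dom}(\psi')$, $f_{wc}(e\mid\psi)\ge f_{wc}(e\mid\psi')$.
   Context: Pool-based active learning setting: $E$ is a finite set of data points and $O$ a finite set of labels. $\mathcal{H}$ is a finite set of hypotheses, each $h\in\mathcal{H}$ a function $h:E\to O$, with a prior probability distribution $p_H$ on $\mathcal{H}$; $p_H(\mathcal{H}')=\sum_{h\in\mathcal{H}'}p_H(h)$. Realizations are functions $\phi:E\to O$ with prior $p(\phi)=p_H(\{h\in\mathcal{H}:h=\phi\})$; $\Phi\sim p$. A partial realization is $\psi:S\to O$ with $\mathrm{dom}(\psi)=S\subseteq E$, identified with its set of pairs; $\psi\subseteq\psi'$ means $\psi'$ extends $\psi$; $\phi\sim\psi$ (or $h\sim\psi$) means agreement on $\mathrm{dom}(\psi)$; only $\psi$ with $\Pr[\Phi\sim\psi]>0$ are considered, and $p(\phi\mid\psi)=\Pr[\Phi=\phi\mid\Phi\sim\psi]$. The version space is $\mathcal{H}(\psi)=\{h\in\mathcal{H}:h\sim\psi\}$, and $\phi|_S$ denotes the restriction of $\phi$ to $S$. For $S\subseteq E$ and partial realization $\psi$, $f(S,\psi)=\mathbb{E}[f(S,\Phi)\mid\Phi\sim\psi]$. For $e\notin\mathrm{dom}(\psi)$, $O(e,\psi)=\{o\in O:\exists\phi,\ p(\phi\mid\psi)>0,\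 \phi(e)=o\}$ and $f_{wc}(e\mid\psi)=\min_{o\in O(e,\psi)}\{f(\mathrm{dom}(\psi)\cup\{e\},\psi\cup\{(e,o)\})-f(\mathrm{dom}(\psi),\psi)\}$. $f$ is worst-case submodular if $f_{wc}(e\mid\psi)\ge f_{wc}(e\mid\psi')$ for all $\psi\subseteq\psi'$ and all $e\in E\setminus\mathrm{dom}(\psi')$. *)

theory Defs
  imports "HOL-Analysis.Analysis"
begin

(* Data points: the finite type 'e (E = UNIV); labels: the finite type 'o (O = UNIV).
   Partial realizations: maps 'e \<rightharpoonup> 'o (dom psi = S). *)

definition prior_on :: "('e \<Rightarrow> 'o) set \<Rightarrow> (('e \<Rightarrow> 'o) \<Rightarrow> real) \<Rightarrow> bool" where
  "prior_on H pH \<longleftrightarrow> finite H \<and> (\<forall>h\<in>H. pH h \<ge> 0) \<and> (\<Sum>h\<in>H. pH h) = 1"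

definition pH_set :: "('e \<Rightarrow> 'o) set \<Rightarrow> (('e \<Rightarrow> 'o) \<Rightarrow> real) \<Rightarrow> ('e \<Rightarrow> 'o) set \<Rightarrow> real" where
  "pH_set H pH H' = (\<Sum>h\<in>H \<inter> H'. pH h)"

definition real_prior :: "('e \<Rightarrow> 'o) set \<Rightarrow> (('e \<Rightarrow> 'o) \<Rightarrow> real) \<Rightarrow> ('e \<Rightarrow> 'o) \<Rightarrow> real" where
  "real_prior H pH phi = pH_set H pH {h. h = phi}"

definition consistent :: "('e \<Rightarrow> 'o) \<Rightarrow> ('e \<rightharpoonup> 'o) \<Rightarrow> bool" where
  "consistent phi psi \<longleftrightarrow> (\<forall>e\<in>dom psi. psi e = Some (phi e))"

definition version_space :: "('e \<Rightarrow> 'o) set \<Rightarrow> ('e \<rightharpoonup> 'o) \<Rightarrow> ('e \<Rightarrow> 'o) set" where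
  "version_space H psi = {h\<in>H. consistent h psi}"

definition restrict_real :: "('e \<Rightarrow> 'o) \<Rightarrow> 'e set \<Rightarrow> ('e \<rightharpoonup> 'o)" where
  "restrict_real phi S = (\<lambda>e. if e \<in> S then Some (phi e) else None)"

definition prob_cons :: "('e::finite \<Rightarrow> 'o::finite) set \<Rightarrow> (('e \<Rightarrow> 'o) \<Rightarrow> real) \<Rightarrow> ('e \<rightharpoonup> 'o) \<Rightarrow> real" where
  "prob_cons H pH psi = (\<Sum>phi\<in>UNIV. if consistent phi psi then real_prior H pH phi else 0)"

definition cond_prior :: "('e::finite \<Rightarrow> 'o::finite) set \<Rightarrow> (('e \<Rightarrow> 'o) \<Rightarrow> real) \<Rightarrow> ('e \<Rightarrow> 'o) \<Rightarrow> ('e \<rightharpoonup> 'o) \<Rightarrow> real" where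
  "cond_prior H pH phi psi =
     (if consistent phi psi then real_prior H pH phi / prob_cons H pH psi else 0)"

definition cond_util :: "('e::finite \<Rightarrow> 'o::finite) set \<Rightarrow> (('e \<Rightarrow> 'o) \<Rightarrow> real)
    \<Rightarrow> ('e set \<Rightarrow> ('e \<Rightarrow> 'o) \<Rightarrow> real) \<Rightarrow> 'e set \<Rightarrow> ('e \<rightharpoonup> 'o) \<Rightarrow> real" where
  "cond_util H pH f S psi = (\<Sum>phi\<in>UNIV. cond_prior H pH phi psi * f S phi)"

definition outcomes :: "('e::finite \<Rightarrow> 'o::finite) set \<Rightarrow> (('e \<Rightarrow> 'o) \<Rightarrow> real) \<Rightarrow> 'e \<Rightarrow> ('e \<rightharpoonup> 'o) \<Rightarrow> 'o set" where
  "outcomes H pH e psi = {ob. \<exists>phi. cond_prior H pH phi psi > 0 \<and> phi e = ob}"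

definition f_wc :: "('e::finite \<Rightarrow> 'o::finite) set \<Rightarrow> (('e \<Rightarrow> 'o) \<Rightarrow> real)
    \<Rightarrow> ('e set \<Rightarrow> ('e \<Rightarrow> 'o) \<Rightarrow> real) \<Rightarrow> 'e \<Rightarrow> ('e \<rightharpoonup> 'o) \<Rightarrow> real" where
  "f_wc H pH f e psi =
     Min ((\<lambda>ob. cond_util H pH f (dom psi \<union> {e}) (psi(e \<mapsto> ob)) - cond_util H pH f (dom psi) psi)
          ` outcomes H pH e psi)"

definition wc_submodular :: "('e::finite \<Rightarrow> 'o::finite) set \<Rightarrow> (('e \<Rightarrow> 'o) \<Rightarrow> real)
    \<Rightarrow> ('e set \<Rightarrow> ('e \<Rightarrow> 'o) \<Rightarrow> real) \<Rightarrow> bool" where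
  "wc_submodular H pH f \<longleftrightarrow>
     (\<forall>psi psi' e. psi \<subseteq>\<^sub>m psi' \<longrightarrow> prob_cons H pH psi > 0 \<longrightarrow> prob_cons H pH psi' > 0
        \<longrightarrow> e \<notin> dom psi' \<longrightarrow> f_wc H pH f e psi \<ge> f_wc H pH f e psi')"

definition version_util :: "('e \<Rightarrow> 'o) set \<Rightarrow> (('e \<Rightarrow> 'o) \<Rightarrow> real) \<Rightarrow> 'e set \<Rightarrow> ('e \<Rightarrow> 'o) \<Rightarrow> real" where
  "version_util H pH S phi = 1 - pH_set H pH (version_space H (restrict_real phi S))"

end

theory Submission
  imports Defs
begin

definition Mass :: "('e \<Rightarrow> 'o) set \<Rightarrow> (('e \<Rightarrow> 'o) \<Rightarrow> real) \<Rightarrow> ('e \<rightharpoonup> 'o) \<Rightarrow> real" where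
  "Mass H pH psi = (\<Sum>h\<in>{h\<in>H. consistent h psi}. pH h)"

definition Dm :: "('e \<Rightarrow> 'o) set \<Rightarrow> (('e \<Rightarrow> 'o) \<Rightarrow> real) \<Rightarrow> ('e \<rightharpoonup> 'o) \<Rightarrow> 'e \<Rightarrow> 'o \<Rightarrow> real" where
  "Dm H pH psi e ob = (\<Sum>h\<in>{h\<in>H. consistent h psi \<and> h e \<noteq> ob}. pH h)"

lemma real_prior_eq: "real_prior H pH phi = (if phi \<in> H then pH phi else 0)"
proof -
  have "H \<inter> {h. h = phi} = (if phi \<in> H then {phi} else {})" by auto
  thus ?thesis by (simp add: real_prior_def pH_set_def)
qed

lemma prob_cons_eq:
  fixes H :: "('e::finite \<Rightarrow> 'o::finite) set"
  shows "prob_cons H pH psi = Mass H pH psi"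
proof -
  have "prob_cons H pH psi = (\<Sum>phi\<in>UNIV. if phi \<in> {h\<in>H. consistent h psi} then pH phi else 0)"
    unfolding prob_cons_def by (rule sum.cong) (auto simp: real_prior_eq)
  also have "\<dots> = Mass H pH psi"
    unfolding Mass_def by (subst sum.If_cases) auto
  finally show ?thesis .
qed

lemma Mass_nonneg: "prior_on H pH \<Longrightarrow> Mass H pH psi \<ge> 0"
  unfolding Mass_def prior_on_def by (auto intro: sum_nonneg)

lemma restrict_cons: "consistent phi psi \<Longrightarrow> restrict_real phi (dom psi) = psi"
  unfolding restrict_real_def consistent_def
  by (rule ext) (auto simp: dom_def)

lemma cond_util_eq:
  fixes H :: "('e::finite \<Rightarrow> 'o::finite) set"
  assumes pos: "Mass H pH psi > 0"
  shows "cond_util H pH (version_util H pH) (dom psi) psi = 1 - Mass H pH psi"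
proof -
  have vs: "pH_set H pH (version_space H psi) = Mass H pH psi"
    unfolding pH_set_def version_space_def Mass_def
    by (rule sum.cong) auto
  have "cond_util H pH (version_util H pH) (dom psi) psi
      = (\<Sum>phi\<in>UNIV. cond_prior H pH phi psi * (1 - Mass H pH psi))"
    unfolding cond_util_def
    by (rule sum.cong) (auto simp: cond_prior_def version_util_def restrict_cons vs)
  also have "\<dots> = (\<Sum>phi\<in>UNIV. cond_prior H pH phi psi) * (1 - Mass H pH psi)"
    by (simp add: sum_distrib_right)
  also have "(\<Sum>phi\<in>UNIV. cond_prior H pH phi psi)
      = (\<Sum>phi\<in>UNIV. (if consistent phi psi then real_prior H pH phi else 0)) / prob_cons H pH psi"
    unfolding cond_prior_def sum_divide_distrib by (rule sum.cong) auto
  also have "\<dots> = 1" using pos by (simp add: prob_cons_eq flip: prob_cons_def)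
  finally show ?thesis by simp
qed

lemma cond_prior_pos:
  fixes H :: "('e::finite \<Rightarrow> 'o::finite) set"
  assumes "prior_on H pH" "Mass H pH psi > 0"
  shows "cond_prior H pH phi psi > 0 \<longleftrightarrow> consistent phi psi \<and> phi \<in> H \<and> pH phi > 0"
  using assms by (auto simp: cond_prior_def real_prior_eq prob_cons_eq divide_pos_pos
      zero_less_divide_iff split: if_splits)

lemma outcomes_eq:
  fixes H :: "('e::finite \<Rightarrow> 'o::finite) set"
  assumes "prior_on H pH" "Mass H pH psi > 0"
  shows "outcomes H pH e psi = {ob. \<exists>h\<in>H. pH h > 0 \<and> consistent h psi \<and> h e = ob}"
  unfolding outcomes_def using cond_prior_pos[OF assms] by auto

lemma cons_upd: "e \<notin> dom psi \<Longrightarrow> consistent h (psi(e \<mapsto> ob)) \<longleftrightarrow> consistent h psi \<and> h e = ob"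
  unfolding consistent_def by auto

lemma Mass_split:
  assumes "prior_on H pH" "e \<notin> dom psi"
  shows "Mass H pH psi = Mass H pH (psi(e \<mapsto> ob)) + Dm H pH psi e ob"
proof -
  have fin: "finite H" using assms(1) by (simp add: prior_on_def)
  have "{h\<in>H. consistent h psi} = {h\<in>H. consistent h (psi(e \<mapsto> ob))} \<union> {h\<in>H. consistent h psi \<and> h e \<noteq> ob}"
    using cons_upd[OF assms(2)] by auto
  moreover have "{h\<in>H. consistent h (psi(e \<mapsto> ob))} \<inter> {h\<in>H. consistent h psi \<and> h e \<noteq> ob} = {}"
    using cons_upd[OF assms(2)] by auto
  ultimately show ?thesis unfolding Mass_def Dm_def
    by (simp add: sum.union_disjoint fin)
qed

lemma Mass_upd_pos:
  fixes H :: "('e::finite \<Rightarrow> 'o::finite) set"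
  assumes pr: "prior_on H pH" and pos: "Mass H pH psi > 0" and e: "e \<notin> dom psi"
    and ob: "ob \<in> outcomes H pH e psi"
  shows "Mass H pH (psi(e \<mapsto> ob)) > 0"
proof -
  obtain h where h: "h \<in> H" "pH h > 0" "consistent h psi" "h e = ob"
    using ob outcomes_eq[OF pr pos] by auto
  have fin: "finite H" and nn: "\<forall>h\<in>H. pH h \<ge> 0" using pr by (auto simp: prior_on_def)
  have "pH h \<le> Mass H pH (psi(e \<mapsto> ob))"
    unfolding Mass_def
    by (rule member_le_sum) (use h fin nn cons_upd[OF e] in auto)
  thus ?thesis using h by simp
qed

lemma f_wc_eq:
  fixes H :: "('e::finite \<Rightarrow> 'o::finite) set"
  assumes pr: "prior_on H pH" and pos: "Mass H pH psi > 0" and e: "e \<notin> dom psi"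
  shows "f_wc H pH (version_util H pH) e psi = Min (Dm H pH psi e ` outcomes H pH e psi)"
proof -
  have "\<And>ob. ob \<in> outcomes H pH e psi \<Longrightarrow>
     cond_util H pH (version_util H pH) (dom psi \<union> {e}) (psi(e \<mapsto> ob)) - cond_util H pH (version_util H pH) (dom psi) psi
     = Dm H pH psi e ob"
  proof -
    fix ob assume ob: "ob \<in> outcomes H pH e psi"
    have d: "dom psi \<union> {e} = dom (psi(e \<mapsto> ob))" by auto
    show "cond_util H pH (version_util H pH) (dom psi \<union> {e}) (psi(e \<mapsto> ob)) - cond_util H pH (version_util H pH) (dom psi) psi
     = Dm H pH psi e ob"
      unfolding d cond_util_eq[OF Mass_upd_pos[OF pr pos e ob]] cond_util_eq[OF pos]
      using Mass_split[OF pr e, of ob] by simp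
  qed
  thus ?thesis unfolding f_wc_def by (simp cong: image_cong)
qed

theorem proposition1:
  fixes H :: "('e::finite \<Rightarrow> 'o::finite) set" and pH :: "('e \<Rightarrow> 'o) \<Rightarrow> real"
  assumes "prior_on H pH"
  shows "wc_submodular H pH (version_util H pH)"
  unfolding wc_submodular_def
proof (intro allI impI)
  fix psi psi' :: "'e \<rightharpoonup> 'o" and e
  assume le: "psi \<subseteq>\<^sub>m psi'" and p1: "prob_cons H pH psi > 0" and p2: "prob_cons H pH psi' > 0"
    and e': "e \<notin> dom psi'"
  have pr: "prior_on H pH" by fact
  have fin: "finite H" and nn: "\<forall>h\<in>H. pH h \<ge> 0" using pr by (auto simp: prior_on_def)
  have pos: "Mass H pH psi > 0" and pos': "Mass H pH psi' > 0" using p1 p2 by (simp_all add: prob_cons_eq)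
  have e: "e \<notin> dom psi" using le e' by (force simp: map_le_def dom_def)
  have conssub: "consistent h psi" if "consistent h psi'" for h
    using that le unfolding consistent_def map_le_def by (force simp: dom_def)
  let ?O = "outcomes H pH e psi" and ?O' = "outcomes H pH e psi'"
  have finO: "finite (Dm H pH psi e ` ?O)" "finite (Dm H pH psi' e ` ?O')" by auto
  obtain h0 where h0: "h0 \<in> H" "pH h0 > 0" "consistent h0 psi'"
  proof -
    have "\<exists>h\<in>{h\<in>H. consistent h psi'}. pH h \<noteq> 0"
      using pos' unfolding Mass_def by (metis (mono_tags, lifting) less_irrefl sum.neutral)
    then obtain h where "h \<in> H" "consistent h psi'" "pH h \<noteq> 0" by auto
    with nn that show ?thesis by force
  qed
  have O'ne: "h0 e \<in> ?O'" using h0 outcomes_eq[OF pr pos'] by auto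
  hence One: "?O \<noteq> {}" using outcomes_eq[OF pr pos] outcomes_eq[OF pr pos'] conssub by blast
  obtain os where os: "os \<in> ?O" "Min (Dm H pH psi e ` ?O) = Dm H pH psi e os"
    using Min_in[OF finO(1)] One by (metis (no_types, lifting) image_iff image_is_empty)
  have mono: "Dm H pH psi' e os \<le> Dm H pH psi e os"
    unfolding Dm_def
    by (rule sum_mono2) (use fin nn conssub in auto)
  have "Min (Dm H pH psi' e ` ?O') \<le> Dm H pH psi' e os"
  proof (cases "os \<in> ?O'")
    case True thus ?thesis using finO(2) by simp
  next
    case False
    have z: "Mass H pH (psi'(e \<mapsto> os)) = 0"
      unfolding Mass_def
    proof (rule sum.neutral, rule ballI)
      fix h assume "h \<in> {h \<in> H. consistent h (psi'(e \<mapsto> os))}"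
      hence h: "h \<in> H" "consistent h psi'" "h e = os" using cons_upd[OF e'] by auto
      have "\<not> pH h > 0" using False h outcomes_eq[OF pr pos'] by auto
      thus "pH h = 0" using nn h by force
    qed
    have "Dm H pH psi' e (h0 e) \<le> Mass H pH psi'"
      using Mass_split[OF pr e', of "h0 e"] Mass_nonneg[OF pr] by (metis le_add_same_cancel2)
    also have "\<dots> = Dm H pH psi' e os" using Mass_split[OF pr e', of os] z by simp
    finally show ?thesis using finO(2) O'ne by (meson Min_le image_eqI order_trans)
  qed
  thus "f_wc H pH (version_util H pH) e psi' \<le> f_wc H pH (version_util H pH) e psi"
    unfolding f_wc_eq[OF pr pos e] f_wc_eq[OF pr pos' e'] os(2) using mono by simp
qed

end
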